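(* Let $T$ be a tree with colour classes $F_1$ and $F_2$. Let $R\subseteq F_1$ with $|R|\le 2$ such that, if $|R|=2$, the two vertices of $R$ have no common neighbour in $T$. Let $\varepsilon>0$ and $\alpha>2\varepsilon$. Let $G$ be a graph and let $(X,Y)$ be an $\varepsilon$-regular pair in $G$ with density $d(X,Y)>3\alpha$, such that $|F_1|\le\varepsilon|X|$ and $|F_2|\le \varepsilon|Y|$. Let $X'\subseteq X$ and $Y'\subseteq Y$ satisfy $|X'|>2\frac{\varepsilon}{\alpha}|X|$ and $|Y'|>2\frac{\varepsilon}{\alpha}|Y|$. Let $\varphi$ be any injective map from $R$ into the set of vertices of $X'$ having more than $3\varepsilon|Y|$ neighbours in $Y'$. Then $\varphi$ can be extended to an injective map $\varphi:V(T)\to X\cup Y$ which maps every edge of $T$ to an edge of $G$ and satisfies $\varphi(F_1)\subseteq X'$ and $\varphi(F_2)\subseteq Y'$.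
   Context: For disjoint vertex sets $X,Y$ of a graph $G$, $E(X,Y)$ is the set of edges with one end in $X$ and the other in $Y$, and the density is $d(X,Y)=\frac{|E(X,Y)|}{|X||Y|}$. The pair $(X,Y)$ is $\varepsilon$-regular if for all $X'\subseteq X$, $Y'\subseteq Y$ with $|X'|\ge\varepsilon|X|$ and $|Y'|\ge \varepsilon|Y|$ we have $|d(X',Y')-d(X,Y)|\le\varepsilon$. *)

theory Defs
  imports Complex_Main
begin

definition graph :: "'a set \<Rightarrow> 'a set set \<Rightarrow> bool" where
  "graph V E \<longleftrightarrow> finite V \<and> (\<forall>e\<in>E. e \<subseteq> V \<and> card e = 2)"

definition adj :: "'a set set \<Rightarrow> 'a \<Rightarrow> 'a \<Rightarrow> bool" where
  "adj E u v \<longleftrightarrow> {u, v} \<in> E"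

definition connected_graph :: "'a set \<Rightarrow> 'a set set \<Rightarrow> bool" where
  "connected_graph V E \<longleftrightarrow> V \<noteq> {} \<and>
     (\<forall>u\<in>V. \<forall>v\<in>V. (u, v) \<in> {(x, y). adj E x y}\<^sup>*)"

definition is_cycle :: "'a set set \<Rightarrow> 'a list \<Rightarrow> bool" where
  "is_cycle E vs \<longleftrightarrow> length vs \<ge> 3 \<and> distinct vs \<and>
     (\<forall>i. Suc i < length vs \<longrightarrow> adj E (vs ! i) (vs ! Suc i)) \<and>
     adj E (last vs) (hd vs)"

definition acyclic_graph :: "'a set set \<Rightarrow> bool" where
  "acyclic_graph E \<longleftrightarrow> \<not> (\<exists>vs. is_cycle E vs)"

definition tree :: "'a set \<Rightarrow> 'a set set \<Rightarrow> bool" where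
  "tree V E \<longleftrightarrow> graph V E \<and> connected_graph V E \<and> acyclic_graph E"

definition colour_classes :: "'a set \<Rightarrow> 'a set set \<Rightarrow> 'a set \<Rightarrow> 'a set \<Rightarrow> bool" where
  "colour_classes V E F1 F2 \<longleftrightarrow> F1 \<union> F2 = V \<and> F1 \<inter> F2 = {} \<and>
     (\<forall>e\<in>E. card (e \<inter> F1) = 1 \<and> card (e \<inter> F2) = 1)"

definition cross_edges :: "'a set set \<Rightarrow> 'a set \<Rightarrow> 'a set \<Rightarrow> 'a set set" where
  "cross_edges E X Y = {e\<in>E. \<exists>x\<in>X. \<exists>y\<in>Y. e = {x, y}}"

definition density :: "'a set set \<Rightarrow> 'a set \<Rightarrow> 'a set \<Rightarrow> real" where
  "density E X Y = real (card (cross_edges E X Y)) / (real (card X) * real (card Y))"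

definition eps_regular :: "'a set set \<Rightarrow> real \<Rightarrow> 'a set \<Rightarrow> 'a set \<Rightarrow> bool" where
  "eps_regular E \<epsilon> X Y \<longleftrightarrow>
     (\<forall>X' Y'. X' \<subseteq> X \<and> Y' \<subseteq> Y \<and> real (card X') \<ge> \<epsilon> * real (card X)
        \<and> real (card Y') \<ge> \<epsilon> * real (card Y)
        \<longrightarrow> \<bar>density E X' Y' - density E X Y\<bar> \<le> \<epsilon>)"

definition neighbours_in :: "'a set set \<Rightarrow> 'a \<Rightarrow> 'a set \<Rightarrow> 'a set" where
  "neighbours_in E v S = {u\<in>S. adj E v u}"

end

theory Submission
  imports Defs
begin

definition tpath :: "'b set set \<Rightarrow> 'b list \<Rightarrow> bool" where
  "tpath ET P \<longleftrightarrow> distinct P \<and> (\<forall>i. Suc i < length P \<longrightarrow> adj ET (P!i) (P!Suc i))"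

definition deg_le1 :: "'b set set \<Rightarrow> 'b \<Rightarrow> bool" where
  "deg_le1 ET v \<longleftrightarrow> (\<forall>u w. adj ET v u \<longrightarrow> adj ET v w \<longrightarrow> u = w)"

lemma adj_sym: "adj ET a b \<longleftrightarrow> adj ET b a"
  by (simp add: adj_def insert_commute)

lemma adj_in: "graph VT ET \<Longrightarrow> adj ET a b \<Longrightarrow> a \<in> VT \<and> b \<in> VT \<and> a \<noteq> b"
proof -
  assume g: "graph VT ET" and a: "adj ET a b"
  then have e: "{a,b} \<in> ET" by (simp add: adj_def)
  then have "{a,b} \<subseteq> VT" "card {a,b} = 2" using g by (auto simp: graph_def)
  then show ?thesis by (cases "a = b") auto
qed

lemma chord:
  assumes G: "graph VT ET" and A: "acyclic_graph ET" and P: "tpath ET P"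
    and ij: "i < j" "j < length P" and a: "adj ET (P!i) (P!j)"
  shows "j = Suc i"
proof (rule ccontr)
  assume ne: "j \<noteq> Suc i"
  define Q where "Q = take (j - i + 1) (drop i P)"
  have lQ: "length Q = j - i + 1" using ij unfolding Q_def by auto
  have nth: "\<And>k. k \<le> j - i \<Longrightarrow> Q ! k = P ! (i + k)"
    unfolding Q_def using ij by auto
  have "is_cycle ET Q"
    unfolding is_cycle_def
  proof (intro conjI allI impI)
    show "3 \<le> length Q" using lQ ij ne by auto
    show "distinct Q" using P unfolding Q_def tpath_def by auto
    fix k assume k: "Suc k < length Q"
    have k1: "k \<le> j - i" "Suc k \<le> j - i" using k lQ by auto
    have "Suc (i + k) < length P" using k1 ij by auto
    then have "adj ET (P ! (i+k)) (P ! Suc (i + k))" using P unfolding tpath_def by blast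
    then show "adj ET (Q ! k) (Q ! Suc k)" using nth[OF k1(1)] nth[OF k1(2)] by simp
  next
    have Qne: "Q \<noteq> []" using lQ by auto
    have "last Q = P ! j" using lQ nth[of "j-i"] ij Qne by (simp add: last_conv_nth)
    moreover have "hd Q = P ! i" using nth[of 0] Qne by (simp add: hd_conv_nth)
    ultimately show "adj ET (last Q) (hd Q)" using a adj_sym by metis
  qed
  then show False using A unfolding acyclic_graph_def by blast
qed

lemma chord2:
  assumes G: "graph VT ET" and A: "acyclic_graph ET" and P: "tpath ET P"
    and ij: "i < length P" "j < length P" and a: "adj ET (P!i) (P!j)"
  shows "j = Suc i \<or> i = Suc j"
proof -
  have "i \<noteq> j" using adj_in[OF G a] by auto
  then have "i < j \<or> j < i" by arith
  then show ?thesis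
  proof
    assume "i < j" then show ?thesis using chord[OF G A P _ ij(2) a] by simp
  next
    assume ji: "j < i"
    have a': "adj ET (P!j) (P!i)" using a adj_sym by metis
    show ?thesis using chord[OF G A P ji ij(1) a'] by simp
  qed
qed

lemma tpath_rev: "tpath ET P \<Longrightarrow> tpath ET (rev P)"
  unfolding tpath_def
proof (intro conjI allI impI)
  fix i assume h: "distinct P \<and> (\<forall>i. Suc i < length P \<longrightarrow> adj ET (P ! i) (P ! Suc i))" and i: "Suc i < length (rev P)"
  have "adj ET (P ! (length P - Suc (Suc i))) (P ! Suc (length P - Suc (Suc i)))"
    using h i by auto
  moreover have "Suc (length P - Suc (Suc i)) = length P - Suc i" using i by auto
  ultimately show "adj ET (rev P ! i) (rev P ! Suc i)" using i
    by (simp add: rev_nth adj_sym)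
qed auto

definition maxp :: "'b set \<Rightarrow> 'b set set \<Rightarrow> 'b list \<Rightarrow> bool" where
  "maxp VT ET P \<longleftrightarrow> tpath ET P \<and> set P \<subseteq> VT \<and> (\<forall>Q. tpath ET Q \<longrightarrow> set Q \<subseteq> VT \<longrightarrow> length Q \<le> length P)"

lemma maxp_rev: "maxp VT ET P \<Longrightarrow> maxp VT ET (rev P)"
proof -
  assume M: "maxp VT ET P"
  have "tpath ET (rev P)" using M tpath_rev unfolding maxp_def by blast
  moreover have "set (rev P) \<subseteq> VT" using M unfolding maxp_def by simp
  moreover have "\<forall>Q. tpath ET Q \<longrightarrow> set Q \<subseteq> VT \<longrightarrow> length Q \<le> length (rev P)" using M unfolding maxp_def by simp
  ultimately show ?thesis unfolding maxp_def by blast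
qed

lemma endpoint:
  assumes G: "graph VT ET" and A: "acyclic_graph ET" and M: "maxp VT ET P"
    and l: "length P \<ge> 2" and a: "adj ET (P!0) u"
  shows "u = P!1"
proof (cases "u \<in> set P")
  case True
  then obtain j where j: "j < length P" "u = P!j" by (metis in_set_conv_nth)
  have P: "tpath ET P" using M unfolding maxp_def by blast
  have Pn: "0 < length P" using l by auto
  have "j = Suc 0 \<or> 0 = Suc j" using chord2[OF G A P Pn j(1)] a j by simp
  then show ?thesis using j by simp
next
  case False
  have P: "tpath ET P" and S: "set P \<subseteq> VT" using M unfolding maxp_def by blast+
  have uV: "u \<in> VT" using adj_in[OF G a] by auto
  have "tpath ET (u # P)"
    unfolding tpath_def
  proof (intro conjI allI impI)
    show "distinct (u # P)" using False P unfolding tpath_def by simp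
    fix i assume i: "Suc i < length (u # P)"
    show "adj ET ((u # P) ! i) ((u # P) ! Suc i)"
    proof (cases i)
      case 0 then show ?thesis using a adj_sym by (metis nth_Cons_0 nth_Cons_Suc)
    next
      case (Suc k) then show ?thesis using P i unfolding tpath_def by auto
    qed
  qed
  moreover have "set (u # P) \<subseteq> VT" using S uV by simp
  moreover have "\<forall>Q. tpath ET Q \<longrightarrow> set Q \<subseteq> VT \<longrightarrow> length Q \<le> length P" using M unfolding maxp_def by blast
  ultimately have "length (u # P) \<le> length P" by blast
  then show ?thesis by simp
qed

lemma endpoint_deg: "graph VT ET \<Longrightarrow> acyclic_graph ET \<Longrightarrow> maxp VT ET P \<Longrightarrow> length P \<ge> 2 \<Longrightarrow> deg_le1 ET (P!0)"
  unfolding deg_le1_def using endpoint by metis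

lemma second:
  assumes G: "graph VT ET" and A: "acyclic_graph ET" and M: "maxp VT ET P"
    and l: "length P \<ge> 3" and H: "\<forall>v\<in>VT. deg_le1 ET v \<longrightarrow> v \<in> set P"
    and a: "adj ET (P!1) u"
  shows "u = P!0 \<or> u = P!2"
proof (cases "u \<in> set P")
  case True
  then obtain j where j: "j < length P" "u = P!j" by (metis in_set_conv_nth)
  have P: "tpath ET P" using M unfolding maxp_def by blast
  have Pn: "1 < length P" using l by auto
  have "j = Suc 1 \<or> 1 = Suc j" using chord2[OF G A P Pn j(1)] a j by simp
  then have "j = 2 \<or> j = 0" by auto
  then show ?thesis using j by auto
next
  case False
  have P: "tpath ET P" and S: "set P \<subseteq> VT" using M unfolding maxp_def by blast+
  have uV: "u \<in> VT" using adj_in[OF G a] by auto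
  define Q where "Q = u # tl P"
  have lQ: "length Q = length P" using l unfolding Q_def by auto
  have Q1: "Q ! Suc i = P ! Suc i" for i unfolding Q_def using l by (cases P) auto
  have "tpath ET Q"
    unfolding tpath_def
  proof (intro conjI allI impI)
    have st: "set (tl P) \<subseteq> set P" by (cases P) auto
    have "distinct (tl P)" using P unfolding tpath_def by (simp add: distinct_tl)
    then show "distinct Q" using False st unfolding Q_def by auto
    fix i assume i: "Suc i < length Q"
    show "adj ET (Q ! i) (Q ! Suc i)"
    proof (cases i)
      case 0
      have "adj ET u (P!1)" using a adj_sym by metis
      then show ?thesis using Q1[of 0] 0 by (simp add: Q_def)
    next
      case (Suc k) then show ?thesis using P i lQ Q1 unfolding tpath_def by auto
    qed
  qed
  moreover have "set (tl P) \<subseteq> set P" by (cases P) auto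
  then have "set Q \<subseteq> VT" using S uV unfolding Q_def by auto
  moreover have "\<forall>Q. tpath ET Q \<longrightarrow> set Q \<subseteq> VT \<longrightarrow> length Q \<le> length P" using M unfolding maxp_def by blast
  ultimately have "maxp VT ET Q" using lQ unfolding maxp_def by simp
  then have "deg_le1 ET (Q!0)" using endpoint_deg[OF G A] lQ l by auto
  then have "u \<in> set P" using H uV Q_def by auto
  then show ?thesis using False by auto
qed

lemma pick3:
  assumes "finite A" "finite B1" "finite B2"
    and "real (card A) > real (card B1) + real (card B2)"
  shows "\<exists>x\<in>A. x \<notin> B1 \<and> x \<notin> B2"
proof (rule ccontr)
  assume "\<not> ?thesis"
  then have "A \<subseteq> B1 \<union> B2" by auto
  then have "card A \<le> card (B1 \<union> B2)" using assms by (intro card_mono) auto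
  also have "\<dots> \<le> card B1 + card B2" by (rule card_Un_le)
  finally show False using assms(4) by linarith
qed

lemma cross_le: "finite A \<Longrightarrow> finite B \<Longrightarrow> card (cross_edges E A B) \<le> card A * card B"
proof -
  assume f: "finite A" "finite B"
  have "cross_edges E A B \<subseteq> (\<lambda>(x,y). {x,y}) ` (A \<times> B)"
    unfolding cross_edges_def by auto
  then have "card (cross_edges E A B) \<le> card ((\<lambda>(x,y). {x,y}) ` (A \<times> B))"
    using f by (intro card_mono) auto
  also have "\<dots> \<le> card (A \<times> B)" by (rule card_image_le) (use f in auto)
  finally show ?thesis by (simp add: card_cartesian_product)
qed

lemma cross_sumX: "finite A \<Longrightarrow> finite B \<Longrightarrow> card (cross_edges E A B) \<le> (\<Sum>x\<in>A. card (neighbours_in E x B))"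
proof -
  assume f: "finite A" "finite B"
  have "cross_edges E A B \<subseteq> (\<Union>x\<in>A. (\<lambda>y. {x,y}) ` neighbours_in E x B)"
    unfolding cross_edges_def neighbours_in_def adj_def by auto
  then have "card (cross_edges E A B) \<le> card (\<Union>x\<in>A. (\<lambda>y. {x,y}) ` neighbours_in E x B)"
    using f by (intro card_mono) (auto simp: neighbours_in_def)
  also have "\<dots> \<le> (\<Sum>x\<in>A. card ((\<lambda>y. {x,y}) ` neighbours_in E x B))" by (rule card_UN_le) (use f in auto)
  also have "\<dots> \<le> (\<Sum>x\<in>A. card (neighbours_in E x B))" by (intro sum_mono card_image_le) (use f in \<open>auto simp: neighbours_in_def\<close>)
  finally show ?thesis .
qed

lemma cross_sumY: "finite A \<Longrightarrow> finite B \<Longrightarrow> card (cross_edges E A B) \<le> (\<Sum>y\<in>B. card (neighbours_in E y A))"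
proof -
  assume f: "finite A" "finite B"
  have "cross_edges E A B \<subseteq> (\<Union>y\<in>B. (\<lambda>x. {x,y}) ` neighbours_in E y A)"
  proof
    fix e assume "e \<in> cross_edges E A B"
    then obtain x y where e: "e \<in> E" "x \<in> A" "y \<in> B" "e = {x,y}" unfolding cross_edges_def by auto
    then have "x \<in> neighbours_in E y A" unfolding neighbours_in_def adj_def by (auto simp: insert_commute)
    then show "e \<in> (\<Union>y\<in>B. (\<lambda>x. {x,y}) ` neighbours_in E y A)" using e by blast
  qed
  then have "card (cross_edges E A B) \<le> card (\<Union>y\<in>B. (\<lambda>x. {x,y}) ` neighbours_in E y A)"
    using f by (intro card_mono) (auto simp: neighbours_in_def)
  also have "\<dots> \<le> (\<Sum>y\<in>B. card ((\<lambda>x. {x,y}) ` neighbours_in E y A))" by (rule card_UN_le) (use f in auto)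
  also have "\<dots> \<le> (\<Sum>y\<in>B. card (neighbours_in E y A))" by (intro sum_mono card_image_le) (use f in \<open>auto simp: neighbours_in_def\<close>)
  finally show ?thesis .
qed

locale emb =
  fixes V :: "'a set" and E :: "'a set set" and X Y X' Y' :: "'a set" and \<epsilon> \<alpha> :: real
  assumes G: "graph V E" and XY: "X \<subseteq> V" "Y \<subseteq> V" "X \<inter> Y = {}"
    and reg: "eps_regular E \<epsilon> X Y"
    and dens: "density E X Y > 3 * \<alpha>"
    and eps: "\<epsilon> > 0" and alpha: "\<alpha> > 2 * \<epsilon>"
    and X': "X' \<subseteq> X" "real (card X') > 2 * (\<epsilon> / \<alpha>) * real (card X)"
    and Y': "Y' \<subseteq> Y" "real (card Y') > 2 * (\<epsilon> / \<alpha>) * real (card Y)"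
begin

definition gX where "gX = {x\<in>X'. real (card (neighbours_in E x Y')) > 3 * \<epsilon> * real (card Y)}"
definition gY where "gY = {y\<in>Y'. real (card (neighbours_in E y X')) > 3 * \<epsilon> * real (card X)}"

lemma finV: "finite V" using G graph_def by auto
lemma finX: "finite X" using finite_subset[OF XY(1) finV] .
lemma finY: "finite Y" using finite_subset[OF XY(2) finV] .
lemma finX': "finite X'" using finX X' finite_subset by auto
lemma finY': "finite Y'" using finY Y' finite_subset by auto

lemma gX_sub: "gX \<subseteq> X'" unfolding gX_def by auto
lemma gY_sub: "gY \<subseteq> Y'" unfolding gY_def by auto
lemma gXX: "gX \<subseteq> X" using gX_sub X' by auto
lemma gYY: "gY \<subseteq> Y" using gY_sub Y' by auto

lemma cardXY_pos: "card X > 0 \<and> card Y > 0"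
proof (rule ccontr)
  assume "\<not> ?thesis"
  then have "real (card X) * real (card Y) = 0" by auto
  then have "density E X Y = 0" unfolding density_def by simp
  then show False using dens alpha eps by linarith
qed

lemma dens_le1: "density E X Y \<le> 1"
proof -
  have c: "card (cross_edges E X Y) \<le> card X * card Y" using cross_le finX finY by blast
  have p: "real (card X) * real (card Y) > 0" using cardXY_pos by auto
  have "real (card (cross_edges E X Y)) \<le> real (card X) * real (card Y)"
    using c by (metis of_nat_le_iff of_nat_mult)
  then show ?thesis unfolding density_def using p by simp
qed

lemma alpha_le: "3 * \<alpha> < 1" using dens dens_le1 by linarith

lemma ratio: "\<epsilon> / \<alpha> \<ge> 3 * \<epsilon>"
proof -
  have a: "\<alpha> > 0" using alpha eps by linarith
  have "(3 * \<alpha>) * \<epsilon> \<le> 1 * \<epsilon>" using alpha_le eps by (intro mult_right_mono) auto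
  then have "3 * \<epsilon> * \<alpha> \<le> \<epsilon>" by (simp add: algebra_simps)
  then show ?thesis using a by (simp add: pos_le_divide_eq)
qed

lemma X'big: "real (card X') > 6 * \<epsilon> * real (card X)"
proof -
  have "2 * (\<epsilon> / \<alpha>) * real (card X) \<ge> 6 * \<epsilon> * real (card X)"
    using ratio by (intro mult_right_mono) auto
  then show ?thesis using X' by linarith
qed

lemma Y'big: "real (card Y') > 6 * \<epsilon> * real (card Y)"
proof -
  have "2 * (\<epsilon> / \<alpha>) * real (card Y) \<ge> 6 * \<epsilon> * real (card Y)"
    using ratio by (intro mult_right_mono) auto
  then show ?thesis using Y' by linarith
qed

lemma X'ge: "real (card X') \<ge> \<epsilon> * real (card X)" using X'big eps mult_nonneg_nonneg[of \<epsilon> "real (card X)"] by linarith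
lemma Y'ge: "real (card Y') \<ge> \<epsilon> * real (card Y)" using Y'big eps mult_nonneg_nonneg[of \<epsilon> "real (card Y)"] by linarith

lemma regD: "A \<subseteq> X \<Longrightarrow> B \<subseteq> Y \<Longrightarrow> real (card A) \<ge> \<epsilon> * real (card X) \<Longrightarrow> real (card B) \<ge> \<epsilon> * real (card Y)
  \<Longrightarrow> density E A B \<ge> density E X Y - \<epsilon>"
proof -
  assume h: "A \<subseteq> X" "B \<subseteq> Y" "real (card A) \<ge> \<epsilon> * real (card X)" "real (card B) \<ge> \<epsilon> * real (card Y)"
  have "\<forall>X' Y'. X' \<subseteq> X \<and> Y' \<subseteq> Y \<and> real (card X') \<ge> \<epsilon> * real (card X)
        \<and> real (card Y') \<ge> \<epsilon> * real (card Y)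
        \<longrightarrow> \<bar>density E X' Y' - density E X Y\<bar> \<le> \<epsilon>" using reg unfolding eps_regular_def .
  then have "\<bar>density E A B - density E X Y\<bar> \<le> \<epsilon>" using h by blast
  then show ?thesis by linarith
qed

lemma nonX: "real (card (X' - gX)) < \<epsilon> * real (card X)"
proof (rule ccontr)
  define B where "B = X' - gX"
  assume "\<not> real (card (X' - gX)) < \<epsilon> * real (card X)"
  then have Bb: "real (card B) \<ge> \<epsilon> * real (card X)" unfolding B_def by simp
  have BX: "B \<subseteq> X" using X' B_def by auto
  have fB: "finite B" using finX' B_def by auto
  have Bpos: "real (card B) > 0" using Bb eps cardXY_pos by (smt (verit) mult_pos_pos of_nat_0_less_iff)
  have Y'pos: "real (card Y') > 0" using Y'big eps cardXY_pos by (smt (verit) mult_pos_pos of_nat_0_less_iff)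
  have d: "density E B Y' \<ge> density E X Y - \<epsilon>" using regD[OF BX Y'(1) Bb Y'ge] .
  have "real (card (cross_edges E B Y')) \<le> real (\<Sum>x\<in>B. card (neighbours_in E x Y'))"
    using cross_sumX[OF fB finY', where E=E] of_nat_le_iff by blast
  also have "\<dots> = (\<Sum>x\<in>B. real (card (neighbours_in E x Y')))" by simp
  also have "\<dots> \<le> (\<Sum>x\<in>B. 3 * \<epsilon> * real (card Y))"
    by (intro sum_mono) (auto simp: B_def gX_def)
  also have "\<dots> = real (card B) * (3 * \<epsilon> * real (card Y))" by simp
  finally have c: "real (card (cross_edges E B Y')) \<le> real (card B) * (3 * \<epsilon> * real (card Y))" .
  have "density E B Y' * (real (card B) * real (card Y')) = real (card (cross_edges E B Y'))"
    unfolding density_def using Bpos Y'pos by simp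
  then have h0: "density E B Y' * real (card Y') \<le> 3 * \<epsilon> * real (card Y)"
    using c Bpos by (smt (verit) mult.assoc mult.commute mult_le_cancel_left_pos)
  have "density E B Y' > 5 / 2 * \<alpha>" using d dens alpha by linarith
  then have "5 / 2 * \<alpha> * real (card Y') < density E B Y' * real (card Y')"
    using Y'pos by (rule mult_strict_right_mono)
  moreover have "5 / 2 * \<alpha> * real (card Y') = 5 / 2 * (\<alpha> * real (card Y'))" by simp
  ultimately have h1: "5 / 2 * (\<alpha> * real (card Y')) < 3 * \<epsilon> * real (card Y)"
    using h0 by linarith
  moreover have "\<alpha> * real (card Y') > 2 * \<epsilon> * real (card Y)"
  proof -
    have a: "\<alpha> > 0" using alpha eps by linarith
    have "2 * \<epsilon> * real (card Y) / \<alpha> < real (card Y')" using Y'(2) by simp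
    then show ?thesis using a by (simp add: pos_divide_less_eq mult.commute)
  qed
  moreover have "\<epsilon> * real (card Y) \<ge> 0" using eps by simp
  ultimately show False using h1 by linarith
qed

lemma nonY: "real (card (Y' - gY)) < \<epsilon> * real (card Y)"
proof (rule ccontr)
  define B where "B = Y' - gY"
  assume "\<not> real (card (Y' - gY)) < \<epsilon> * real (card Y)"
  then have Bb: "real (card B) \<ge> \<epsilon> * real (card Y)" unfolding B_def by simp
  have BY: "B \<subseteq> Y" using Y' B_def by auto
  have fB: "finite B" using finY' B_def by auto
  have Bpos: "real (card B) > 0" using Bb eps cardXY_pos by (smt (verit) mult_pos_pos of_nat_0_less_iff)
  have X'pos: "real (card X') > 0" using X'big eps cardXY_pos by (smt (verit) mult_pos_pos of_nat_0_less_iff)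
  have d: "density E X' B \<ge> density E X Y - \<epsilon>" using regD[OF X'(1) BY X'ge Bb] .
  have "real (card (cross_edges E X' B)) \<le> real (\<Sum>y\<in>B. card (neighbours_in E y X'))"
    using cross_sumY[OF finX' fB, where E=E] of_nat_le_iff by blast
  also have "\<dots> = (\<Sum>y\<in>B. real (card (neighbours_in E y X')))" by simp
  also have "\<dots> \<le> (\<Sum>y\<in>B. 3 * \<epsilon> * real (card X))"
    by (intro sum_mono) (auto simp: B_def gY_def)
  also have "\<dots> = real (card B) * (3 * \<epsilon> * real (card X))" by simp
  finally have c: "real (card (cross_edges E X' B)) \<le> real (card B) * (3 * \<epsilon> * real (card X))" .
  have "density E X' B * (real (card B) * real (card X')) = real (card (cross_edges E X' B))"
    unfolding density_def using Bpos X'pos by simp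
  then have h0: "density E X' B * real (card X') \<le> 3 * \<epsilon> * real (card X)"
    using c Bpos by (smt (verit) mult.assoc mult.commute mult_le_cancel_left_pos)
  have "density E X' B > 5 / 2 * \<alpha>" using d dens alpha by linarith
  then have "5 / 2 * \<alpha> * real (card X') < density E X' B * real (card X')"
    using X'pos by (rule mult_strict_right_mono)
  moreover have "5 / 2 * \<alpha> * real (card X') = 5 / 2 * (\<alpha> * real (card X'))" by simp
  ultimately have h1: "5 / 2 * (\<alpha> * real (card X')) < 3 * \<epsilon> * real (card X)"
    using h0 by linarith
  moreover have "\<alpha> * real (card X') > 2 * \<epsilon> * real (card X)"
  proof -
    have a: "\<alpha> > 0" using alpha eps by linarith
    have "2 * \<epsilon> * real (card X) / \<alpha> < real (card X')" using X'(2) by simp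
    then show ?thesis using a by (simp add: pos_divide_less_eq mult.commute)
  qed
  moreover have "\<epsilon> * real (card X) \<ge> 0" using eps by simp
  ultimately show False using h1 by linarith
qed

lemma fail:
  assumes S: "S \<subseteq> Y" "real (card S) \<ge> \<epsilon> * real (card Y)"
  shows "real (card {x\<in>X'. \<forall>y\<in>S. \<not> adj E x y}) < \<epsilon> * real (card X)"
proof (rule ccontr)
  define B where "B = {x\<in>X'. \<forall>y\<in>S. \<not> adj E x y}"
  assume "\<not> ?thesis"
  then have Bb: "real (card B) \<ge> \<epsilon> * real (card X)" unfolding B_def by simp
  have BX: "B \<subseteq> X" using X' B_def by auto
  have "cross_edges E B S = {}"
  proof (rule ccontr)
    assume "cross_edges E B S \<noteq> {}"
    then obtain e x y where "e \<in> E" "x \<in> B" "y \<in> S" "e = {x,y}" unfolding cross_edges_def by blast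
    then have "adj E x y" "\<not> adj E x y" unfolding adj_def B_def by auto
    then show False by simp
  qed
  then have "density E B S = 0" unfolding density_def by simp
  then show False using regD[OF BX S(1) Bb S(2)] dens alpha eps by linarith
qed

end

definition del :: "'b set set \<Rightarrow> 'b set \<Rightarrow> 'b set set" where
  "del ET S = {e\<in>ET. e \<inter> S = {}}"

lemma adj_del: "adj (del ET S) a b \<longleftrightarrow> adj ET a b \<and> a \<notin> S \<and> b \<notin> S"
  unfolding adj_def del_def by auto

lemma graph_del: "graph VT ET \<Longrightarrow> graph (VT - S) (del ET S)"
  unfolding graph_def del_def by blast

lemma acyc_del: "acyclic_graph ET \<Longrightarrow> acyclic_graph (del ET S)"
  unfolding acyclic_graph_def is_cycle_def adj_del by blast

lemma cc_del: "colour_classes VT ET F1 F2 \<Longrightarrow> colour_classes (VT - S) (del ET S) (F1 - S) (F2 - S)"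
proof -
  assume c: "colour_classes VT ET F1 F2"
  have "\<forall>e\<in>del ET S. card (e \<inter> (F1 - S)) = 1 \<and> card (e \<inter> (F2 - S)) = 1"
  proof
    fix e assume e: "e \<in> del ET S"
    then have "e \<inter> (F1 - S) = e \<inter> F1" "e \<inter> (F2 - S) = e \<inter> F2" unfolding del_def by auto
    then show "card (e \<inter> (F1 - S)) = 1 \<and> card (e \<inter> (F2 - S)) = 1"
      using c e unfolding colour_classes_def del_def by auto
  qed
  then show ?thesis using c unfolding colour_classes_def by blast
qed

lemma class_adj:
  assumes G: "graph VT ET" and C: "colour_classes VT ET F1 F2" and a: "adj ET u v"
  shows "u \<in> F1 \<Longrightarrow> v \<in> F2" and "u \<in> F2 \<Longrightarrow> v \<in> F1"
proof -
  have e: "{u,v} \<in> ET" using a adj_def by metis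
  have uv: "u \<in> VT" "v \<in> VT" "u \<noteq> v" using adj_in[OF G a] by auto
  have c1: "card ({u,v} \<inter> F1) = 1" and c2: "card ({u,v} \<inter> F2) = 1"
    using C e unfolding colour_classes_def by auto
  have U: "F1 \<union> F2 = VT" and D: "F1 \<inter> F2 = {}" using C unfolding colour_classes_def by auto
  show "u \<in> F1 \<Longrightarrow> v \<in> F2"
  proof -
    assume u: "u \<in> F1"
    have "v \<notin> F1"
    proof
      assume "v \<in> F1"
      then have "{u,v} \<inter> F1 = {u,v}" using u by auto
      then show False using c1 uv by simp
    qed
    then show ?thesis using U uv by auto
  qed
  show "u \<in> F2 \<Longrightarrow> v \<in> F1"
  proof -
    assume u: "u \<in> F2"
    have "v \<notin> F2"
    proof
      assume "v \<in> F2"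
      then have "{u,v} \<inter> F2 = {u,v}" using u by auto
      then show False using c2 uv by simp
    qed
    then show ?thesis using U uv by auto
  qed
qed

lemma maxp_ex:
  assumes G: "graph VT ET" and e: "e \<in> ET"
  shows "\<exists>P. maxp VT ET P \<and> length P \<ge> 2"
proof -
  obtain a b where ab: "e = {a,b}" "a \<noteq> b" "a \<in> VT" "b \<in> VT"
    using G e unfolding graph_def by (metis card_2_iff insert_subset)
  have fin: "finite VT" using G graph_def by auto
  define L where "L = {length Q | Q. tpath ET Q \<and> set Q \<subseteq> VT}"
  have "tpath ET [a,b]" unfolding tpath_def adj_def using ab e by (auto simp: less_Suc_eq)
  then have 2: "2 \<in> L" unfolding L_def using ab by force
  have "L \<subseteq> {..card VT}"
  proof
    fix l assume "l \<in> L"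
    then obtain Q where Q: "l = length Q" "tpath ET Q" "set Q \<subseteq> VT" unfolding L_def by auto
    then have "length Q = card (set Q)" using distinct_card tpath_def by metis
    also have "\<dots> \<le> card VT" using Q fin card_mono by auto
    finally show "l \<in> {..card VT}" using Q by auto
  qed
  then have fL: "finite L" using finite_subset by blast
  have "Max L \<in> L" using fL 2 Max_in by auto
  then obtain P where P: "Max L = length P" "tpath ET P" "set P \<subseteq> VT" unfolding L_def by auto
  have "maxp VT ET P" unfolding maxp_def
  proof (intro conjI allI impI)
    fix Q assume "tpath ET Q" "set Q \<subseteq> VT"
    then have "length Q \<in> L" unfolding L_def by auto
    then show "length Q \<le> length P" using P fL Max_ge by metis
  qed (use P in auto)
  moreover have "length P \<ge> 2" using P 2 fL Max_ge by metis
  ultimately show ?thesis by blast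
qed

lemma inj_ext:
  assumes "inj_on f (VT - S)" "inj_on f (VT \<inter> S)" "f ` (VT - S) \<inter> f ` (VT \<inter> S) = {}"
  shows "inj_on f VT"
proof -
  have "VT = (VT - S) \<union> (VT \<inter> S)" by auto
  moreover have "inj_on f ((VT - S) \<union> (VT \<inter> S))"
    using assms by (auto simp: inj_on_Un)
  ultimately show ?thesis by simp
qed

context emb
begin

definition hyps where
  "hyps VT ET F1 F2 R \<phi> W \<longleftrightarrow> graph VT ET \<and> acyclic_graph ET \<and> colour_classes VT ET F1 F2 \<and> R \<subseteq> F1 \<and> card R \<le> 2
     \<and> (card R = 2 \<longrightarrow> \<not> (\<exists>w\<in>VT. \<forall>r\<in>R. adj ET r w)) \<and> finite W
     \<and> real (card F1 + card (W \<inter> X)) \<le> \<epsilon> * real (card X)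
     \<and> real (card F2 + card (W \<inter> Y)) \<le> \<epsilon> * real (card Y)
     \<and> inj_on \<phi> R \<and> \<phi> ` R \<subseteq> gX \<and> \<phi> ` R \<inter> W = {}"

definition concl where
  "concl VT ET F1 F2 R \<phi> W \<psi> \<longleftrightarrow> inj_on \<psi> VT \<and> (\<forall>r\<in>R. \<psi> r = \<phi> r)
     \<and> (\<forall>u v. adj ET u v \<longrightarrow> adj E (\<psi> u) (\<psi> v)) \<and> \<psi> ` F1 \<subseteq> gX \<and> \<psi> ` F2 \<subseteq> gY \<and> \<psi> ` VT \<inter> W = {}"

lemma gXY: "gX \<inter> gY = {}" using gXX gYY XY(3) by auto

lemma hyps_del:
  assumes h: "hyps VT ET F1 F2 R \<phi> W" and RS: "R \<inter> S = {}"
  shows "hyps (VT - S) (del ET S) (F1 - S) (F2 - S) R \<phi> W"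
proof -
  have G: "graph VT ET" and C: "colour_classes VT ET F1 F2" using h unfolding hyps_def by auto
  have fin: "finite F1" "finite F2" using G C unfolding graph_def colour_classes_def
    by (metis finite_Un)+
  have "card (F1 - S) \<le> card F1" "card (F2 - S) \<le> card F2" using fin by (auto intro: card_mono)
  moreover have "card R = 2 \<longrightarrow> \<not> (\<exists>w\<in>VT - S. \<forall>r\<in>R. adj (del ET S) r w)"
    using h unfolding hyps_def adj_del by blast
  ultimately show ?thesis using h RS graph_del acyc_del cc_del unfolding hyps_def by auto
qed

lemma edges_ext:
  assumes "\<And>u v. adj ET u v \<Longrightarrow> u \<notin> S \<Longrightarrow> v \<notin> S \<Longrightarrow> adj E (\<psi> u) (\<psi> v)"
    and "\<And>u v. adj ET u v \<Longrightarrow> u \<in> S \<Longrightarrow> adj E (\<psi> u) (\<psi> v)"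
  shows "adj ET u v \<Longrightarrow> adj E (\<psi> u) (\<psi> v)"
  using assms adj_sym by metis

lemma assemble:
  assumes h: "hyps VT ET F1 F2 R \<phi> W"
    and c: "concl (VT - S) (del ET S) (F1 - S) (F2 - S) R' \<phi>' W' \<psi>'"
    and psi: "\<psi> = (\<lambda>v. if v \<in> S then g v else \<psi>' v)"
    and inj: "inj_on g (VT \<inter> S)" and disj: "g ` (VT \<inter> S) \<inter> \<psi>' ` (VT - S) = {}"
    and WW: "W \<subseteq> W'" and gW: "g ` (VT \<inter> S) \<inter> W = {}"
    and RS: "\<forall>r\<in>R. r \<in> S \<longrightarrow> g r = \<phi> r" and RR: "\<forall>r\<in>R. r \<notin> S \<longrightarrow> r \<in> R' \<and> \<phi>' r = \<phi> r"
    and ed: "\<And>u v. adj ET u v \<Longrightarrow> u \<in> S \<Longrightarrow> adj E (\<psi> u) (\<psi> v)"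
    and g1: "g ` (F1 \<inter> S) \<subseteq> gX" and g2: "g ` (F2 \<inter> S) \<subseteq> gY"
  shows "concl VT ET F1 F2 R \<phi> W \<psi>"
proof -
  have C: "colour_classes VT ET F1 F2" using h unfolding hyps_def by auto
  have FV: "F1 \<subseteq> VT" "F2 \<subseteq> VT" using C unfolding colour_classes_def by auto
  have e1: "\<psi> ` (VT - S) = \<psi>' ` (VT - S)" using psi by auto
  have e2: "\<psi> ` (VT \<inter> S) = g ` (VT \<inter> S)" using psi by auto
  have i1: "inj_on \<psi> (VT - S)" using c psi unfolding concl_def inj_on_def by auto
  have i2: "inj_on \<psi> (VT \<inter> S)" using inj psi unfolding inj_on_def by auto
  have "inj_on \<psi> VT" using inj_ext[OF i1 i2] e1 e2 disj by auto
  moreover have "\<forall>r\<in>R. \<psi> r = \<phi> r" using RS RR c psi unfolding concl_def by auto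
  moreover have "\<forall>u v. adj ET u v \<longrightarrow> adj E (\<psi> u) (\<psi> v)"
  proof (intro allI impI)
    fix u v assume a: "adj ET u v"
    show "adj E (\<psi> u) (\<psi> v)"
    proof (rule edges_ext[where S=S, OF _ ed a])
      fix u v assume "adj ET u v" "u \<notin> S" "v \<notin> S"
      then have "adj (del ET S) u v" using adj_del by metis
      then show "adj E (\<psi> u) (\<psi> v)" using c psi \<open>u \<notin> S\<close> \<open>v \<notin> S\<close> unfolding concl_def by auto
    qed
  qed
  moreover have "\<psi> ` F1 \<subseteq> gX"
  proof
    fix x assume "x \<in> \<psi> ` F1"
    then obtain v where v: "v \<in> F1" "x = \<psi> v" by auto
    show "x \<in> gX"
    proof (cases "v \<in> S")
      case True then show ?thesis using v g1 psi by auto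
    next
      case False then show ?thesis using v c psi unfolding concl_def by auto
    qed
  qed
  moreover have "\<psi> ` F2 \<subseteq> gY"
  proof
    fix x assume "x \<in> \<psi> ` F2"
    then obtain v where v: "v \<in> F2" "x = \<psi> v" by auto
    show "x \<in> gY"
    proof (cases "v \<in> S")
      case True then show ?thesis using v g2 psi by auto
    next
      case False then show ?thesis using v c psi unfolding concl_def by auto
    qed
  qed
  moreover have "\<psi> ` VT \<inter> W = {}"
  proof -
    have "\<psi> ` VT = \<psi> ` (VT - S) \<union> \<psi> ` (VT \<inter> S)" by auto
    moreover have "\<psi>' ` (VT - S) \<inter> W = {}" using c WW unfolding concl_def by auto
    ultimately show ?thesis using e1 e2 gW by auto
  qed
  ultimately show ?thesis unfolding concl_def by blast
qed

lemma hypsD: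
  assumes h: "hyps VT ET F1 F2 R \<phi> W"
  shows "graph VT ET" "acyclic_graph ET" "colour_classes VT ET F1 F2" "R \<subseteq> F1" "card R \<le> 2"
    "card R = 2 \<Longrightarrow> \<not> (\<exists>w\<in>VT. \<forall>r\<in>R. adj ET r w)" "finite W"
    "real (card F1 + card (W \<inter> X)) \<le> \<epsilon> * real (card X)"
    "real (card F2 + card (W \<inter> Y)) \<le> \<epsilon> * real (card Y)"
    "inj_on \<phi> R" "\<phi> ` R \<subseteq> gX" "\<phi> ` R \<inter> W = {}"
    "F1 \<union> F2 = VT" "F1 \<inter> F2 = {}" "finite F1" "finite F2" "finite VT" "finite R"
proof -
  show G: "graph VT ET" "acyclic_graph ET" "colour_classes VT ET F1 F2" "R \<subseteq> F1" "card R \<le> 2"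
    "card R = 2 \<Longrightarrow> \<not> (\<exists>w\<in>VT. \<forall>r\<in>R. adj ET r w)" "finite W"
    "real (card F1 + card (W \<inter> X)) \<le> \<epsilon> * real (card X)"
    "real (card F2 + card (W \<inter> Y)) \<le> \<epsilon> * real (card Y)"
    "inj_on \<phi> R" "\<phi> ` R \<subseteq> gX" "\<phi> ` R \<inter> W = {}"
    using h unfolding hyps_def by auto
  show U: "F1 \<union> F2 = VT" "F1 \<inter> F2 = {}" using G(3) unfolding colour_classes_def by auto
  show fV: "finite VT" using G(1) unfolding graph_def by auto
  show "finite F1" "finite F2" using fV U by (metis finite_Un)+
  then show "finite R" using G(4) finite_subset by auto
qed

lemma pickX:
  assumes T0: "T0 \<subseteq> X'" "real (card T0) > 3 * \<epsilon> * real (card X)"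
    and U: "finite U" "real (card U) \<le> 2 * \<epsilon> * real (card X)"
  shows "\<exists>p\<in>T0. p \<in> gX \<and> p \<notin> U"
proof -
  have "real (card T0) > real (card (X' - gX)) + real (card U)" using T0 U nonX by linarith
  then obtain p where "p \<in> T0" "p \<notin> X' - gX" "p \<notin> U"
    using pick3[of T0 "X' - gX" U] T0 U finX' finite_subset by blast
  then show ?thesis using T0 by blast
qed

lemma pickY:
  assumes T0: "T0 \<subseteq> Y'" "real (card T0) > 3 * \<epsilon> * real (card Y)"
    and U: "finite U" "real (card U) \<le> 2 * \<epsilon> * real (card Y)"
  shows "\<exists>p\<in>T0. p \<in> gY \<and> p \<notin> U"
proof -
  have "real (card T0) > real (card (Y' - gY)) + real (card U)" using T0 U nonY by linarith
  then obtain p where "p \<in> T0" "p \<notin> Y' - gY" "p \<notin> U"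
    using pick3[of T0 "Y' - gY" U] T0 U finY' finite_subset by blast
  then show ?thesis using T0 by blast
qed

lemma card_Un_real: "real (card (A \<union> B)) \<le> real (card A) + real (card B)"
  using card_Un_le[of A B] by linarith

lemma epsXnn: "\<epsilon> * real (card X) \<ge> 0" and epsYnn: "\<epsilon> * real (card Y) \<ge> 0"
  using eps by auto

lemma caseA:
  assumes h: "hyps VT ET F1 F2 R \<phi> W" and v: "v \<in> VT" "v \<notin> R" and d: "deg_le1 ET v"
    and IH: "\<exists>\<psi>'. concl (VT - {v}) (del ET {v}) (F1 - {v}) (F2 - {v}) R \<phi> W \<psi>'"
  shows "\<exists>\<psi>. concl VT ET F1 F2 R \<phi> W \<psi>"
proof -
  obtain \<psi>' where c: "concl (VT - {v}) (del ET {v}) (F1 - {v}) (F2 - {v}) R \<phi> W \<psi>'" using IH by blast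
  note H = hypsD[OF h]
  have c1: "\<psi>' ` (F1 - {v}) \<subseteq> gX" and c2: "\<psi>' ` (F2 - {v}) \<subseteq> gY" using c unfolding concl_def by auto
  have VTs: "VT - {v} = (F1 - {v}) \<union> (F2 - {v})" using H by auto
  have "\<exists>p. (v \<in> F1 \<longrightarrow> p \<in> gX) \<and> (v \<in> F2 \<longrightarrow> p \<in> gY) \<and> p \<notin> \<psi>' ` (VT - {v}) \<and> p \<notin> W
      \<and> (\<forall>u. adj ET v u \<longrightarrow> adj E p (\<psi>' u))"
  proof (cases "v \<in> F1")
    case True
    have vF2: "v \<notin> F2" using True H by auto
    obtain T0 where T0: "T0 \<subseteq> X'" "real (card T0) > 3 * \<epsilon> * real (card X)"
      "\<forall>u. adj ET v u \<longrightarrow> T0 \<subseteq> neighbours_in E (\<psi>' u) X'"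
    proof (cases "\<exists>u. adj ET v u")
      case True
      then obtain u0 where u0: "adj ET v u0" by blast
      have "u0 \<in> F2" using class_adj(1)[OF H(1) H(3) u0] \<open>v \<in> F1\<close> by blast
      moreover have "u0 \<noteq> v" using adj_in[OF H(1) u0] by auto
      ultimately have "\<psi>' u0 \<in> gY" using c2 by auto
      then have "real (card (neighbours_in E (\<psi>' u0) X')) > 3 * \<epsilon> * real (card X)" unfolding gY_def by auto
      moreover have "\<forall>u. adj ET v u \<longrightarrow> u = u0" using d u0 unfolding deg_le1_def by blast
      ultimately show ?thesis using that[of "neighbours_in E (\<psi>' u0) X'"] unfolding neighbours_in_def by auto
    next
      case False
      show ?thesis using that[of X'] False X'big epsXnn by auto
    qed
    define U where "U = (W \<inter> X) \<union> \<psi>' ` (F1 - {v})"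
    have fU: "finite U" unfolding U_def using H by auto
    have "real (card (\<psi>' ` (F1 - {v}))) \<le> real (card (F1 - {v}))" using card_image_le[of "F1 - {v}" \<psi>'] H(15) by simp
    also have "\<dots> = real (card F1) - 1"
  proof -
    have "card F1 > 0" using True H(15) card_gt_0_iff by auto
    then show ?thesis using True H(15) by (simp add: of_nat_diff)
  qed
    finally have "real (card U) \<le> real (card (W \<inter> X)) + real (card F1) - 1"
      unfolding U_def using card_Un_real[of "W \<inter> X" "\<psi>' ` (F1 - {v})"] by linarith
    then have "real (card U) \<le> 2 * \<epsilon> * real (card X)" using H(8) epsXnn by simp
    then obtain p where p: "p \<in> T0" "p \<in> gX" "p \<notin> U" using pickX[OF T0(1,2) fU] by blast
    have "p \<notin> \<psi>' ` (F2 - {v})" using p c2 gXY by auto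
    then have "p \<notin> \<psi>' ` (VT - {v})" using p VTs U_def by auto
    moreover have "p \<notin> W" using p U_def gXX by auto
    moreover have "\<forall>u. adj ET v u \<longrightarrow> adj E p (\<psi>' u)"
    proof (intro allI impI)
      fix u assume "adj ET v u"
      then have "p \<in> neighbours_in E (\<psi>' u) X'" using p T0(3) by blast
      then have "adj E (\<psi>' u) p" unfolding neighbours_in_def by simp
      then show "adj E p (\<psi>' u)" using adj_sym by metis
    qed
    ultimately show ?thesis using p vF2 by blast
  next
    case False
    then have vF2: "v \<in> F2" using v H by auto
    obtain T0 where T0: "T0 \<subseteq> Y'" "real (card T0) > 3 * \<epsilon> * real (card Y)"
      "\<forall>u. adj ET v u \<longrightarrow> T0 \<subseteq> neighbours_in E (\<psi>' u) Y'"
    proof (cases "\<exists>u. adj ET v u")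
      case True
      then obtain u0 where u0: "adj ET v u0" by blast
      have "u0 \<in> F1" using class_adj(2)[OF H(1) H(3) u0] vF2 by blast
      moreover have "u0 \<noteq> v" using adj_in[OF H(1) u0] by auto
      ultimately have "\<psi>' u0 \<in> gX" using c1 by auto
      then have "real (card (neighbours_in E (\<psi>' u0) Y')) > 3 * \<epsilon> * real (card Y)" unfolding gX_def by auto
      moreover have "\<forall>u. adj ET v u \<longrightarrow> u = u0" using d u0 unfolding deg_le1_def by blast
      ultimately show ?thesis using that[of "neighbours_in E (\<psi>' u0) Y'"] unfolding neighbours_in_def by auto
    next
      case False
      show ?thesis using that[of Y'] False Y'big epsYnn by auto
    qed
    define U where "U = (W \<inter> Y) \<union> \<psi>' ` (F2 - {v})"
    have fU: "finite U" unfolding U_def using H by auto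
    have "real (card (\<psi>' ` (F2 - {v}))) \<le> real (card (F2 - {v}))" using card_image_le[of "F2 - {v}" \<psi>'] H(16) by simp
    also have "\<dots> = real (card F2) - 1"
  proof -
    have "card F2 > 0" using vF2 H(16) card_gt_0_iff by auto
    then show ?thesis using vF2 H(16) by (simp add: of_nat_diff)
  qed
    finally have "real (card U) \<le> real (card (W \<inter> Y)) + real (card F2) - 1"
      unfolding U_def using card_Un_real[of "W \<inter> Y" "\<psi>' ` (F2 - {v})"] by linarith
    then have "real (card U) \<le> 2 * \<epsilon> * real (card Y)" using H(9) epsYnn by simp
    then obtain p where p: "p \<in> T0" "p \<in> gY" "p \<notin> U" using pickY[OF T0(1,2) fU] by blast
    have "p \<notin> \<psi>' ` (F1 - {v})" using p c1 gXY by auto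
    then have "p \<notin> \<psi>' ` (VT - {v})" using p VTs U_def by auto
    moreover have "p \<notin> W" using p U_def gYY by auto
    moreover have "\<forall>u. adj ET v u \<longrightarrow> adj E p (\<psi>' u)"
    proof (intro allI impI)
      fix u assume "adj ET v u"
      then have "p \<in> neighbours_in E (\<psi>' u) Y'" using p T0(3) by blast
      then have "adj E (\<psi>' u) p" unfolding neighbours_in_def by simp
      then show "adj E p (\<psi>' u)" using adj_sym by metis
    qed
    ultimately show ?thesis using p False by blast
  qed
  then obtain p where p: "v \<in> F1 \<longrightarrow> p \<in> gX" "v \<in> F2 \<longrightarrow> p \<in> gY" "p \<notin> \<psi>' ` (VT - {v})" "p \<notin> W"
      "\<forall>u. adj ET v u \<longrightarrow> adj E p (\<psi>' u)" by blast
  define \<psi> where "\<psi> = (\<lambda>w. if w \<in> {v} then (\<lambda>_. p) w else \<psi>' w)"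
  have "concl VT ET F1 F2 R \<phi> W \<psi>"
  proof (rule assemble[OF h c \<psi>_def])
    show "inj_on (\<lambda>_. p) (VT \<inter> {v})" by (auto simp: inj_on_def)
    show "(\<lambda>_. p) ` (VT \<inter> {v}) \<inter> \<psi>' ` (VT - {v}) = {}" using p by auto
    show "W \<subseteq> W" by simp
    show "(\<lambda>_. p) ` (VT \<inter> {v}) \<inter> W = {}" using p by auto
    show "\<forall>r\<in>R. r \<in> {v} \<longrightarrow> p = \<phi> r" using v by auto
    show "\<forall>r\<in>R. r \<notin> {v} \<longrightarrow> r \<in> R \<and> \<phi> r = \<phi> r" by auto
    show "(\<lambda>_. p) ` (F1 \<inter> {v}) \<subseteq> gX" using p by auto
    show "(\<lambda>_. p) ` (F2 \<inter> {v}) \<subseteq> gY" using p by auto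
    fix u w assume a: "adj ET u w" "u \<in> {v}"
    then have "w \<noteq> v" using adj_in[OF H(1) a(1)] by auto
    then show "adj E (\<psi> u) (\<psi> w)" using a p unfolding \<psi>_def by auto
  qed
  then show ?thesis by blast
qed

end

lemma no_common:
  assumes G: "graph VT ET" and A: "acyclic_graph ET" and P: "tpath ET P" and n: "length P \<ge> 6"
    and a1: "adj ET (P!2) w" and a2: "adj ET (P!(length P - 1)) w"
  shows False
proof (cases "w \<in> set P")
  case True
  then obtain j where j: "j < length P" "w = P!j" by (metis in_set_conv_nth)
  have "j = Suc 2 \<or> 2 = Suc j" using chord2[OF G A P _ j(1), of 2] a1 j n by simp
  moreover have "j = Suc (length P - 1) \<or> length P - 1 = Suc j" using chord2[OF G A P _ j(1), of "length P - 1"] a2 j n by simp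
  ultimately show False using j n by auto
next
  case False
  define Q where "Q = w # drop 2 P"
  have lQ: "length Q = length P - 1" using n unfolding Q_def by auto
  have QS: "Q ! Suc k = P ! (k + 2)" if "k + 2 < length P" for k using that unfolding Q_def by auto
  have "is_cycle ET Q"
    unfolding is_cycle_def
  proof (intro conjI allI impI)
    show "3 \<le> length Q" using lQ n by auto
    have "set (drop 2 P) \<subseteq> set P" by (rule set_drop_subset)
    then show "distinct Q" using False P unfolding Q_def tpath_def by auto
    fix k assume k: "Suc k < length Q"
    show "adj ET (Q ! k) (Q ! Suc k)"
    proof (cases k)
      case 0
      have "adj ET w (P!2)" using a1 adj_sym by metis
      then show ?thesis using 0 QS[of 0] n by (simp add: Q_def)
    next
      case (Suc m)
      have "Suc (m + 2) < length P" using k lQ Suc by auto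
      then have "adj ET (P ! (m+2)) (P ! Suc (m + 2))" using P unfolding tpath_def by blast
      then show ?thesis using Suc QS[of m] QS[of "Suc m"] k lQ by auto
    qed
  next
    have e: "Suc (Suc (length P - 3)) = length P - Suc 0" using n by arith
    have "last Q = P ! (length P - 1)" unfolding Q_def using n e by (simp add: last_conv_nth)
    moreover have "hd Q = w" unfolding Q_def by simp
    ultimately show "adj ET (last Q) (hd Q)" using a2 by simp
  qed
  then show False using A unfolding acyclic_graph_def by blast
qed

context emb
begin

lemma caseG:
  assumes h: "hyps VT ET F1 F2 R \<phi> W" and M: "maxp VT ET P" and n: "length P \<ge> 6"
    and RP: "R = {P!0, P!(length P - 1)}" and Hd: "\<forall>v\<in>VT. deg_le1 ET v \<longrightarrow> v \<in> set P"
    and IH: "\<And>VT' ET' F1' F2' R' \<phi>' W'. card (VT' :: 'b set) < card (VT :: 'b set) \<Longrightarrow> hyps VT' ET' F1' F2' R' \<phi>' W'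
               \<Longrightarrow> \<exists>\<psi>. concl VT' ET' F1' F2' R' \<phi>' W' \<psi>"
  shows "\<exists>\<psi>. concl VT ET F1 F2 R \<phi> W \<psi>"
proof -
  note H = hypsD[OF h]
  have P: "tpath ET P" and SP: "set P \<subseteq> VT" using M unfolding maxp_def by blast+
  define a b y z where "a = P!0" "b = P!1" "y = P!2" "z = P!(length P - 1)"
  have ab: "adj ET a b" "adj ET b y" using P n unfolding tpath_def a_b_y_z_def by (auto simp: numeral_2_eq_2)
  have dist: "a \<noteq> b" "a \<noteq> y" "a \<noteq> z" "b \<noteq> y" "b \<noteq> z" "y \<noteq> z"
  proof -
    have di: "\<And>i j. i < length P \<Longrightarrow> j < length P \<Longrightarrow> P!i = P!j \<Longrightarrow> i = j"
      using P nth_eq_iff_index_eq unfolding tpath_def by blast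
    have Pne: "P \<noteq> []" using n by auto
    have ne: "\<And>i j. i < length P \<Longrightarrow> j < length P \<Longrightarrow> i \<noteq> j \<Longrightarrow> P!i \<noteq> P!j" using di by blast
    show "a \<noteq> b" using ne[of 0 1] n Pne unfolding a_b_y_z_def by simp
    show "a \<noteq> y" using ne[of 0 2] n Pne unfolding a_b_y_z_def by simp
    show "a \<noteq> z" using ne[of 0 "length P - 1"] n Pne unfolding a_b_y_z_def by simp
    show "b \<noteq> y" using ne[of 1 2] n Pne unfolding a_b_y_z_def by simp
    show "b \<noteq> z" using ne[of 1 "length P - 1"] n Pne unfolding a_b_y_z_def by simp
    show "y \<noteq> z" using ne[of 2 "length P - 1"] n Pne unfolding a_b_y_z_def by simp
  qed
  have m: "\<And>i. i < length P \<Longrightarrow> P!i \<in> VT" using SP nth_mem by blast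
  have l: "0 < length P" "1 < length P" "2 < length P" "length P - 1 < length P" using n by auto
  have inV: "a \<in> VT" "b \<in> VT" "y \<in> VT" "z \<in> VT"
    using m[OF l(1)] m[OF l(2)] m[OF l(3)] m[OF l(4)] unfolding a_b_y_z_def by auto
  have RR: "R = {a, z}" using RP a_b_y_z_def by simp
  have cl: "a \<in> F1" "z \<in> F1" using RR H(4) by auto
  have cl2: "b \<in> F2" using class_adj(1)[OF H(1) H(3) ab(1)] cl by auto
  have cl3: "y \<in> F1" using class_adj(2)[OF H(1) H(3) ab(2)] cl2 by auto
  have nb_a: "\<And>u. adj ET a u \<Longrightarrow> u = b" using endpoint[OF H(1) H(2) M] n a_b_y_z_def by auto
  have nb_b: "\<And>u. adj ET b u \<Longrightarrow> u = a \<or> u = y" using second[OF H(1) H(2) M _ Hd] n a_b_y_z_def by auto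
  have nF: "a \<notin> F2" "b \<notin> F1" using cl cl2 H(14) by auto
  have pa: "\<phi> a \<in> gX" "\<phi> z \<in> gX" using H(11) RR by auto
  have WY: "real (card (W \<inter> Y)) \<le> 2 * \<epsilon> * real (card Y)" using H(9) epsYnn by simp
  have T0: "neighbours_in E (\<phi> a) Y' \<subseteq> Y'" unfolding neighbours_in_def by auto
  have T1: "real (card (neighbours_in E (\<phi> a) Y')) > 3 * \<epsilon> * real (card Y)" using pa(1) unfolding gX_def by blast
  have fU: "finite (W \<inter> Y)" using H(7) by blast
  obtain c where c: "c \<in> neighbours_in E (\<phi> a) Y'" "c \<in> gY" "c \<notin> W \<inter> Y"
    using pickY[OF T0 T1 fU WY] by blast
  have cY: "c \<in> Y" using c gYY by auto
  have cW: "c \<notin> W" using c cY by auto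
  have "card {a,z} = 2" using dist by simp
  then have "card F1 \<ge> 2" using cl H(15) by (metis card_mono empty_subsetI insert_subset)
  moreover have "real (card (\<phi> ` R)) \<le> 2" using card_image_le[of R \<phi>] H(5) H(18) by simp
  ultimately have UX: "real (card ((W \<inter> X) \<union> \<phi> ` R)) \<le> 2 * \<epsilon> * real (card X)"
    using card_Un_real[of "W \<inter> X" "\<phi> ` R"] H(8) epsXnn by simp
  have T2: "neighbours_in E c X' \<subseteq> X'" unfolding neighbours_in_def by auto
  have T3: "real (card (neighbours_in E c X')) > 3 * \<epsilon> * real (card X)" using c(2) unfolding gY_def by blast
  have fU2: "finite ((W \<inter> X) \<union> \<phi> ` R)" using H(7) H(18) by blast
  obtain x where x: "x \<in> neighbours_in E c X'" "x \<in> gX" "x \<notin> (W \<inter> X) \<union> \<phi> ` R"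
    using pickX[OF T2 T3 fU2 UX] by blast
  have xX: "x \<in> X" using x gXX by auto
  have xW: "x \<notin> W" using x xX by auto
  have xR: "x \<noteq> \<phi> a" "x \<noteq> \<phi> z" using x RR by auto
  have xc: "x \<noteq> c" using xX cY XY(3) by auto
  have pac: "\<phi> a \<noteq> c" "\<phi> z \<noteq> c" using pa c gXY by auto
  have paz: "\<phi> a \<noteq> \<phi> z" by (rule inj_on_contraD[OF H(10) dist(3)]) (use RR in auto)
  have paW: "\<phi> a \<notin> W" "\<phi> z \<notin> W" using H(12) RR by auto
  have paX: "\<phi> a \<in> X" using pa gXX by auto
  define S where "S = {a, b}"
  define W' where "W' = W \<union> {\<phi> a, c}"
  define \<phi>' where "\<phi>' = \<phi>(y := x)"
  have h': "hyps (VT - S) (del ET S) (F1 - S) (F2 - S) {y, z} \<phi>' W'"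
    unfolding hyps_def
  proof (intro conjI)
    show "graph (VT - S) (del ET S)" using graph_del H(1) by blast
    show "acyclic_graph (del ET S)" using acyc_del H(2) by blast
    show "colour_classes (VT - S) (del ET S) (F1 - S) (F2 - S)" using cc_del H(3) by blast
    show "{y, z} \<subseteq> F1 - S" using cl cl3 dist S_def by auto
    show "card {y, z} \<le> 2" by (simp add: card_insert_if)
    show "card {y, z} = 2 \<longrightarrow> \<not> (\<exists>w\<in>VT - S. \<forall>r\<in>{y, z}. adj (del ET S) r w)"
    proof (intro impI notI)
      assume "\<exists>w\<in>VT - S. \<forall>r\<in>{y, z}. adj (del ET S) r w"
      then obtain w where w: "w \<in> VT - S" "\<forall>r\<in>{y, z}. adj (del ET S) r w" by blast
      then have "adj (del ET S) y w" "adj (del ET S) z w" by auto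
      then have "adj ET y w" "adj ET z w" by (simp_all add: adj_del)
      then show False using no_common[OF H(1) H(2) P n] unfolding a_b_y_z_def by blast
    qed
    show "finite W'" using H(7) W'_def by auto
    have e1: "F1 - S = F1 - {a}" using S_def nF by auto
    have e2: "W' \<inter> X = insert (\<phi> a) (W \<inter> X)" using W'_def cY XY(3) paX by auto
    have f1: "card (F1 - S) = card F1 - 1" using e1 cl H(15) by (simp add: card_Diff_singleton)
    have f2: "card (W' \<inter> X) = Suc (card (W \<inter> X))" using e2 paW H(7) by simp
    have f3: "card F1 > 0" using cl H(15) card_gt_0_iff by auto
    have "card (F1 - S) + card (W' \<inter> X) = card F1 + card (W \<inter> X)"
      using f1 f2 f3 by simp
    then show "real (card (F1 - S) + card (W' \<inter> X)) \<le> \<epsilon> * real (card X)" using H(8) by simp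
    have e3: "F2 - S = F2 - {b}" using S_def nF by auto
    have e4: "W' \<inter> Y = insert c (W \<inter> Y)" using W'_def cY XY(3) paX by auto
    have f1: "card (F2 - S) = card F2 - 1" using e3 cl2 H(16) by (simp add: card_Diff_singleton)
    have f2: "card (W' \<inter> Y) = Suc (card (W \<inter> Y))" using e4 cW H(7) by simp
    have f3: "card F2 > 0" using cl2 H(16) card_gt_0_iff by auto
    have "card (F2 - S) + card (W' \<inter> Y) = card F2 + card (W \<inter> Y)"
      using f1 f2 f3 by simp
    then show "real (card (F2 - S) + card (W' \<inter> Y)) \<le> \<epsilon> * real (card Y)" using H(9) by simp
    show "inj_on \<phi>' {y, z}" using dist xR unfolding \<phi>'_def by auto
    show "\<phi>' ` {y, z} \<subseteq> gX" using dist x pa unfolding \<phi>'_def by auto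
    show "\<phi>' ` {y, z} \<inter> W' = {}" using dist xW xR xc paW paz pac unfolding \<phi>'_def W'_def by auto
  qed
  have "card (VT - S) < card VT" by (rule psubset_card_mono[OF H(17)]) (use inV S_def in auto)
  then obtain \<psi>' where c': "concl (VT - S) (del ET S) (F1 - S) (F2 - S) {y, z} \<phi>' W' \<psi>'" using IH[OF _ h'] by blast
  have psy: "\<psi>' y = x" using c' unfolding concl_def \<phi>'_def by auto
  have psz: "\<psi>' z = \<phi> z" using c' dist unfolding concl_def \<phi>'_def by auto
  define g where "g = (\<lambda>v. if v = a then \<phi> a else c)"
  define \<psi> where "\<psi> = (\<lambda>v. if v \<in> S then g v else \<psi>' v)"
  have "concl VT ET F1 F2 R \<phi> W \<psi>"
  proof (rule assemble[OF h c' \<psi>_def])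
    show "inj_on g (VT \<inter> S)" using pac dist unfolding g_def S_def inj_on_def by auto
    have "g ` (VT \<inter> S) \<subseteq> W'" unfolding g_def S_def W'_def by auto
    moreover have "\<psi>' ` (VT - S) \<inter> W' = {}" using c' unfolding concl_def by blast
    ultimately show "g ` (VT \<inter> S) \<inter> \<psi>' ` (VT - S) = {}" by blast
    show "W \<subseteq> W'" unfolding W'_def by auto
    show "g ` (VT \<inter> S) \<inter> W = {}" using paW cW unfolding g_def S_def by auto
    show "\<forall>r\<in>R. r \<in> S \<longrightarrow> g r = \<phi> r" using RR dist unfolding g_def S_def by auto
    show "\<forall>r\<in>R. r \<notin> S \<longrightarrow> r \<in> {y, z} \<and> \<phi>' r = \<phi> r" using RR dist unfolding \<phi>'_def S_def by auto
    show "g ` (F1 \<inter> S) \<subseteq> gX" using nF pa unfolding g_def S_def by auto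
    show "g ` (F2 \<inter> S) \<subseteq> gY" using nF c dist unfolding g_def S_def by auto
    fix u v assume a: "adj ET u v" "u \<in> S"
    have acx: "adj E (\<phi> a) c" using c unfolding neighbours_in_def by simp
    have ac: "adj E c x" using x unfolding neighbours_in_def by simp
    show "adj E (\<psi> u) (\<psi> v)"
    proof (cases "u = a")
      case True
      then have "v = b" using nb_a a by auto
      then show ?thesis using True acx dist unfolding \<psi>_def g_def S_def by auto
    next
      case False
      then have ub: "u = b" using a S_def by auto
      then have "v = a \<or> v = y" using nb_b a by auto
      then show ?thesis
      proof
        assume "v = a"
        have "adj E c (\<phi> a)" using acx adj_sym by metis
        then show ?thesis using ub \<open>v = a\<close> dist unfolding \<psi>_def g_def S_def by auto
      next
        assume "v = y" then show ?thesis using ub ac psy dist unfolding \<psi>_def g_def S_def by auto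
      qed
    qed
  qed
  then show ?thesis by blast
qed

end

context emb
begin

lemma case4:
  assumes h: "hyps VT ET F1 F2 R \<phi> W" and M: "maxp VT ET P" and n: "length P = 5"
    and RP: "R = {P!0, P!4}" and Hd: "\<forall>v\<in>VT. deg_le1 ET v \<longrightarrow> v \<in> set P"
    and IH: "\<And>VT' ET' F1' F2' R' \<phi>' W'. card (VT' :: 'b set) < card (VT :: 'b set) \<Longrightarrow> hyps VT' ET' F1' F2' R' \<phi>' W'
               \<Longrightarrow> \<exists>\<psi>. concl VT' ET' F1' F2' R' \<phi>' W' \<psi>"
  shows "\<exists>\<psi>. concl VT ET F1 F2 R \<phi> W \<psi>"
proof -
  note H = hypsD[OF h]
  have P: "tpath ET P" and SP: "set P \<subseteq> VT" using M unfolding maxp_def by blast+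
  define a b y d z where "a = P!0" "b = P!1" "y = P!2" "d = P!3" "z = P!4"
  have ab: "adj ET a b" "adj ET b y" "adj ET y d" "adj ET d z" using P n unfolding tpath_def a_b_y_d_z_def
    by (auto simp: numeral_2_eq_2 numeral_3_eq_3 numeral_Bit0)
  have dist: "a \<noteq> b" "a \<noteq> y" "a \<noteq> d" "a \<noteq> z" "b \<noteq> y" "b \<noteq> d" "b \<noteq> z" "y \<noteq> d" "y \<noteq> z" "d \<noteq> z"
  proof -
    have di: "\<And>i j. i < length P \<Longrightarrow> j < length P \<Longrightarrow> P!i = P!j \<Longrightarrow> i = j"
      using P nth_eq_iff_index_eq unfolding tpath_def by blast
    have ne: "\<And>i j. i < 5 \<Longrightarrow> j < 5 \<Longrightarrow> i \<noteq> j \<Longrightarrow> P!i \<noteq> P!j" using di n by auto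
    show "a \<noteq> b" "a \<noteq> y" "a \<noteq> d" "a \<noteq> z" "b \<noteq> y" "b \<noteq> d" "b \<noteq> z" "y \<noteq> d" "y \<noteq> z" "d \<noteq> z"
      unfolding a_b_y_d_z_def by (simp_all add: ne)
  qed
  have m: "\<And>i. i < length P \<Longrightarrow> P!i \<in> VT" using SP nth_mem by blast
  have inV: "a \<in> VT" "b \<in> VT" "d \<in> VT" "z \<in> VT" unfolding a_b_y_d_z_def using m n by auto
  have RR: "R = {a, z}" using RP a_b_y_d_z_def by simp
  have cl: "a \<in> F1" "z \<in> F1" using RR H(4) by auto
  have cl2: "b \<in> F2" using class_adj(1)[OF H(1) H(3) ab(1)] cl by auto
  have cl3: "y \<in> F1" using class_adj(2)[OF H(1) H(3) ab(2)] cl2 by auto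
  have cl4: "d \<in> F2" using class_adj(1)[OF H(1) H(3) ab(3)] cl3 by auto
  have nF: "a \<notin> F2" "z \<notin> F2" "b \<notin> F1" "d \<notin> F1" using cl cl2 cl4 H(14) by auto
  have nb_a: "\<And>u. adj ET a u \<Longrightarrow> u = b" using endpoint[OF H(1) H(2) M] n a_b_y_d_z_def by auto
  have nb_b: "\<And>u. adj ET b u \<Longrightarrow> u = a \<or> u = y"
    using second[OF H(1) H(2) M _ Hd] n a_b_y_d_z_def by auto
  have M': "maxp VT ET (rev P)" using maxp_rev[OF M] .
  have rv: "rev P ! 0 = z" "rev P ! 1 = d" "rev P ! 2 = y" using n unfolding a_b_y_d_z_def by (simp_all add: rev_nth)
  have nb_z: "\<And>u. adj ET z u \<Longrightarrow> u = d" using endpoint[OF H(1) H(2) M'] n rv by auto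
  have Hd': "\<forall>v\<in>VT. deg_le1 ET v \<longrightarrow> v \<in> set (rev P)" using Hd by simp
  have nb_d: "\<And>u. adj ET d u \<Longrightarrow> u = z \<or> u = y"
    using second[OF H(1) H(2) M' _ Hd'] n rv by auto
  have pa: "\<phi> a \<in> gX" "\<phi> z \<in> gX" using H(11) RR by auto
  have paz: "\<phi> a \<noteq> \<phi> z" by (rule inj_on_contraD[OF H(10) dist(4)]) (use RR in auto)
  have paW: "\<phi> a \<notin> W" "\<phi> z \<notin> W" using H(12) RR by auto
  have paX: "\<phi> a \<in> X" "\<phi> z \<in> X" using pa gXX by auto
  have WY: "real (card (W \<inter> Y)) \<le> 2 * \<epsilon> * real (card Y)" using H(9) epsYnn by simp
  have T0: "neighbours_in E (\<phi> a) Y' \<subseteq> Y'" unfolding neighbours_in_def by auto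
  have T1: "real (card (neighbours_in E (\<phi> a) Y')) > 3 * \<epsilon> * real (card Y)" using pa(1) unfolding gX_def by blast
  have fU: "finite (W \<inter> Y)" using H(7) by blast
  obtain c1 where c1: "c1 \<in> neighbours_in E (\<phi> a) Y'" "c1 \<in> gY" "c1 \<notin> W \<inter> Y"
    using pickY[OF T0 T1 fU WY] by blast
  have c1Y: "c1 \<in> Y" using c1 gYY by auto
  have c1W: "c1 \<notin> W" using c1 c1Y by auto
  define N where "N = neighbours_in E (\<phi> z) Y'"
  define G2 where "G2 = (N \<inter> gY) - W - {c1}"
  have G2Y: "G2 \<subseteq> Y" using gYY unfolding G2_def by auto
  have fN: "finite N" using finY' unfolding N_def neighbours_in_def by auto
  have "card {b, d} = 2" using dist by simp
  then have F2c: "card F2 \<ge> 2" using cl2 cl4 H(16) by (metis card_mono empty_subsetI insert_subset)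
  have "card {a, y, z} = 3" using dist by simp
  then have F1c: "card F1 \<ge> 3" using cl cl3 H(15) by (metis card_mono empty_subsetI insert_subset)
  have G2big: "real (card G2) \<ge> \<epsilon> * real (card Y)"
  proof -
    have "N \<subseteq> G2 \<union> (Y' - gY) \<union> (W \<inter> Y) \<union> {c1}" unfolding G2_def N_def neighbours_in_def using Y'(1) by auto
    then have "card N \<le> card (G2 \<union> (Y' - gY) \<union> (W \<inter> Y) \<union> {c1})"
      using fN G2_def finY' H(7) by (intro card_mono) auto
    also have "\<dots> \<le> card G2 + card (Y' - gY) + card (W \<inter> Y) + 1"
    proof -
      have "card (G2 \<union> (Y' - gY) \<union> (W \<inter> Y) \<union> {c1}) \<le> card (G2 \<union> (Y' - gY) \<union> (W \<inter> Y)) + card {c1}" by (rule card_Un_le)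
      moreover have "card (G2 \<union> (Y' - gY) \<union> (W \<inter> Y)) \<le> card (G2 \<union> (Y' - gY)) + card (W \<inter> Y)" by (rule card_Un_le)
      moreover have "card (G2 \<union> (Y' - gY)) \<le> card G2 + card (Y' - gY)" by (rule card_Un_le)
      ultimately show ?thesis by simp
    qed
    finally have "real (card N) \<le> real (card G2) + real (card (Y' - gY)) + real (card (W \<inter> Y)) + 1" by linarith
    moreover have "real (card N) > 3 * \<epsilon> * real (card Y)" using pa(2) unfolding gX_def N_def by blast
    moreover have "real (card (W \<inter> Y)) \<le> \<epsilon> * real (card Y) - 2" using H(9) F2c by linarith
    ultimately show ?thesis using nonY by linarith
  qed
  define Fl where "Fl = {x\<in>X'. \<forall>y\<in>G2. \<not> adj E x y}"
  have Flc: "real (card Fl) < \<epsilon> * real (card X)" using fail[OF G2Y G2big] Fl_def by simp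
  define U where "U = (W \<inter> X) \<union> \<phi> ` R \<union> Fl"
  have fU2: "finite U" unfolding U_def using H(7) H(18) finX' Fl_def by auto
  have UX: "real (card U) \<le> 2 * \<epsilon> * real (card X)"
  proof -
    have "card U \<le> card (W \<inter> X) + card (\<phi> ` R) + card Fl"
    proof -
      have "card U \<le> card ((W \<inter> X) \<union> \<phi> ` R) + card Fl" unfolding U_def by (rule card_Un_le)
      moreover have "card ((W \<inter> X) \<union> \<phi> ` R) \<le> card (W \<inter> X) + card (\<phi> ` R)" by (rule card_Un_le)
      ultimately show ?thesis by simp
    qed
    moreover have "card (\<phi> ` R) \<le> 2" using card_image_le[of R \<phi>] H(5) H(18) by simp
    moreover have "real (card (W \<inter> X)) \<le> \<epsilon> * real (card X) - 3" using H(8) F1c by linarith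
    ultimately show ?thesis using Flc by linarith
  qed
  have T2: "neighbours_in E c1 X' \<subseteq> X'" unfolding neighbours_in_def by auto
  have T3: "real (card (neighbours_in E c1 X')) > 3 * \<epsilon> * real (card X)" using c1(2) unfolding gY_def by blast
  obtain x where x: "x \<in> neighbours_in E c1 X'" "x \<in> gX" "x \<notin> U"
    using pickX[OF T2 T3 fU2 UX] by blast
  have xX: "x \<in> X" "x \<in> X'" using x gXX gX_sub by auto
  have xW: "x \<notin> W" using x xX U_def by auto
  have xR: "x \<noteq> \<phi> a" "x \<noteq> \<phi> z" using x RR U_def by auto
  have "x \<notin> Fl" using x U_def by auto
  then obtain c3 where c3: "c3 \<in> G2" "adj E x c3" using xX Fl_def by auto
  have c3g: "c3 \<in> gY" "c3 \<notin> W" "c3 \<noteq> c1" "c3 \<in> N" using c3 G2_def by auto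
  have c3Y: "c3 \<in> Y" using c3g gYY by auto
  have XYd: "\<And>p q. p \<in> X \<Longrightarrow> q \<in> Y \<Longrightarrow> p \<noteq> q" using XY(3) by auto
  define S where "S = {a, b, d, z}"
  define W' where "W' = W \<union> {\<phi> a, \<phi> z, c1, c3}"
  define \<phi>' where "\<phi>' = (\<lambda>v::'b. x)"
  have h': "hyps (VT - S) (del ET S) (F1 - S) (F2 - S) {y} \<phi>' W'"
    unfolding hyps_def
  proof (intro conjI)
    show "graph (VT - S) (del ET S)" using graph_del H(1) by blast
    show "acyclic_graph (del ET S)" using acyc_del H(2) by blast
    show "colour_classes (VT - S) (del ET S) (F1 - S) (F2 - S)" using cc_del H(3) by blast
    show "{y} \<subseteq> F1 - S" using cl3 dist S_def by auto
    show "card {y} \<le> 2" by simp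
    show "card {y} = 2 \<longrightarrow> \<not> (\<exists>w\<in>VT - S. \<forall>r\<in>{y}. adj (del ET S) r w)" by simp
    show "finite W'" using H(7) W'_def by auto
    have e1: "F1 - S = F1 - {a, z}" using S_def nF by auto
    have e2: "W' \<inter> X = insert (\<phi> a) (insert (\<phi> z) (W \<inter> X))" using W'_def c1Y c3Y XYd paX by auto
    have f1: "card (F1 - S) = card F1 - 2" using e1 cl H(15) dist by (simp add: card_Diff_subset)
    have f2: "card (W' \<inter> X) = Suc (Suc (card (W \<inter> X)))" using e2 paW paz H(7) by simp
    have "card (F1 - S) + card (W' \<inter> X) = card F1 + card (W \<inter> X)"
      using f1 f2 F1c by simp
    then show "real (card (F1 - S) + card (W' \<inter> X)) \<le> \<epsilon> * real (card X)" using H(8) by simp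
    have e3: "F2 - S = F2 - {b, d}" using S_def nF by auto
    have e4: "W' \<inter> Y = insert c1 (insert c3 (W \<inter> Y))" using W'_def c1Y c3Y XYd paX by auto
    have f3: "card (F2 - S) = card F2 - 2" using e3 cl2 cl4 H(16) dist by (simp add: card_Diff_subset)
    have f4: "card (W' \<inter> Y) = Suc (Suc (card (W \<inter> Y)))" using e4 c1W c3g H(7) by auto
    have "card (F2 - S) + card (W' \<inter> Y) = card F2 + card (W \<inter> Y)"
      using f3 f4 F2c by simp
    then show "real (card (F2 - S) + card (W' \<inter> Y)) \<le> \<epsilon> * real (card Y)" using H(9) by simp
    show "inj_on \<phi>' {y}" by simp
    show "\<phi>' ` {y} \<subseteq> gX" using x unfolding \<phi>'_def by auto
    show "\<phi>' ` {y} \<inter> W' = {}" using xW xR XYd xX c1Y c3Y unfolding \<phi>'_def W'_def by auto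
  qed
  have "card (VT - S) < card VT" by (rule psubset_card_mono[OF H(17)]) (use inV S_def in auto)
  then obtain \<psi>' where c': "concl (VT - S) (del ET S) (F1 - S) (F2 - S) {y} \<phi>' W' \<psi>'" using IH[OF _ h'] by blast
  have psy: "\<psi>' y = x" using c' unfolding concl_def \<phi>'_def by auto
  define g where "g = (\<lambda>v. if v = a then \<phi> a else if v = b then c1 else if v = d then c3 else \<phi> z)"
  define \<psi> where "\<psi> = (\<lambda>v. if v \<in> S then g v else \<psi>' v)"
  have vals: "\<phi> a \<noteq> c1" "\<phi> a \<noteq> c3" "\<phi> z \<noteq> c1" "\<phi> z \<noteq> c3" using XYd paX c1Y c3Y by auto
  have "concl VT ET F1 F2 R \<phi> W \<psi>"
  proof (rule assemble[OF h c' \<psi>_def])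
    show "inj_on g (VT \<inter> S)" using vals paz c3g dist unfolding g_def S_def inj_on_def by auto
    have "g ` (VT \<inter> S) \<subseteq> W'" unfolding g_def S_def W'_def by auto
    moreover have "\<psi>' ` (VT - S) \<inter> W' = {}" using c' unfolding concl_def by blast
    ultimately show "g ` (VT \<inter> S) \<inter> \<psi>' ` (VT - S) = {}" by blast
    show "W \<subseteq> W'" unfolding W'_def by auto
    show "g ` (VT \<inter> S) \<inter> W = {}" using paW c1W c3g unfolding g_def S_def by auto
    show "\<forall>r\<in>R. r \<in> S \<longrightarrow> g r = \<phi> r" using RR dist unfolding g_def S_def by auto
    show "\<forall>r\<in>R. r \<notin> S \<longrightarrow> r \<in> {y} \<and> \<phi>' r = \<phi> r" using RR unfolding S_def by auto
    show "g ` (F1 \<inter> S) \<subseteq> gX" using nF pa dist unfolding g_def S_def by auto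
    show "g ` (F2 \<inter> S) \<subseteq> gY" using nF c1 c3g dist unfolding g_def S_def by auto
    fix u v assume a: "adj ET u v" "u \<in> S"
    have e1: "adj E (\<phi> a) c1" using c1 unfolding neighbours_in_def by simp
    have e2: "adj E c1 x" using x unfolding neighbours_in_def by simp
    have e3: "adj E c3 x" using c3 adj_sym by metis
    have e4: "adj E (\<phi> z) c3" using c3g unfolding N_def neighbours_in_def by simp
    have e1': "adj E c1 (\<phi> a)" using e1 adj_sym by metis
    have e4': "adj E c3 (\<phi> z)" using e4 adj_sym by metis
    have pv: "\<psi> a = \<phi> a" "\<psi> b = c1" "\<psi> d = c3" "\<psi> z = \<phi> z" "\<psi> y = x"
      using dist psy unfolding \<psi>_def g_def S_def by auto
    have "u = a \<or> u = b \<or> u = d \<or> u = z" using a S_def by auto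
    then show "adj E (\<psi> u) (\<psi> v)"
    proof (elim disjE)
      assume "u = a" then show ?thesis using nb_a a pv e1 by auto
    next
      assume "u = b" then have "v = a \<or> v = y" using nb_b a by auto
      then show ?thesis using \<open>u = b\<close> pv e1' e2 by auto
    next
      assume "u = d" then have "v = z \<or> v = y" using nb_d a by auto
      then show ?thesis using \<open>u = d\<close> pv e3 e4' by auto
    next
      assume "u = z" then show ?thesis using nb_z a pv e4 by auto
    qed
  qed
  then show ?thesis by blast
qed

end

context emb
begin

lemma main_ind: "hyps (VT :: 'b set) ET F1 F2 R \<phi> W \<Longrightarrow> \<exists>\<psi>. concl VT ET F1 F2 R \<phi> W \<psi>"
proof (induction "card VT" arbitrary: VT ET F1 F2 R \<phi> W rule: less_induct)
  case less
  note h = less.prems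
  note H = hypsD[OF h]
  have IH: "\<And>VT' ET' F1' F2' R' \<phi>' W'. card (VT' :: 'b set) < card VT \<Longrightarrow> hyps VT' ET' F1' F2' R' \<phi>' W'
               \<Longrightarrow> \<exists>\<psi>. concl VT' ET' F1' F2' R' \<phi>' W' \<psi>" using less.hyps by blast
  show ?case
  proof (cases "\<exists>v\<in>VT. v \<notin> R \<and> deg_le1 ET v")
    case True
    then obtain v where v: "v \<in> VT" "v \<notin> R" "deg_le1 ET v" by blast
    have h': "hyps (VT - {v}) (del ET {v}) (F1 - {v}) (F2 - {v}) R \<phi> W" using hyps_del[OF h] v by auto
    have "card (VT - {v}) < card VT" using v H(17) by (meson card_Diff1_less)
    then have "\<exists>\<psi>'. concl (VT - {v}) (del ET {v}) (F1 - {v}) (F2 - {v}) R \<phi> W \<psi>'" using IH h' by blast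
    then show ?thesis using caseA[OF h v] by blast
  next
    case False
    then have H0: "\<forall>v\<in>VT. deg_le1 ET v \<longrightarrow> v \<in> R" by blast
    show ?thesis
    proof (cases "ET = {}")
      case True
      have dl: "\<And>v. deg_le1 ET v" unfolding deg_le1_def adj_def using True by auto
      then have VR: "VT \<subseteq> R" using H0 by auto
      have "concl VT ET F1 F2 R \<phi> W \<phi>"
        unfolding concl_def
      proof (intro conjI)
        show "inj_on \<phi> VT" using H(10) VR inj_on_subset by blast
        show "\<forall>r\<in>R. \<phi> r = \<phi> r" by simp
        show "\<forall>u v. adj ET u v \<longrightarrow> adj E (\<phi> u) (\<phi> v)" using True unfolding adj_def by auto
        show "\<phi> ` F1 \<subseteq> gX" using H(11) H(13) VR by auto
        have "F2 = {}" using H(4) H(13) H(14) VR by auto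
        then show "\<phi> ` F2 \<subseteq> gY" by simp
        show "\<phi> ` VT \<inter> W = {}" using H(12) VR by auto
      qed
      then show ?thesis by blast
    next
      case False
      then obtain e where "e \<in> ET" by auto
      then obtain P where M: "maxp VT ET P" and n2: "length P \<ge> 2" using maxp_ex[OF H(1)] by blast
      have P: "tpath ET P" and SP: "set P \<subseteq> VT" using M unfolding maxp_def by blast+
      define n where "n = length P"
      have m: "\<And>i. i < n \<Longrightarrow> P!i \<in> VT" using SP nth_mem n_def by blast
      have di: "\<And>i j. i < n \<Longrightarrow> j < n \<Longrightarrow> i \<noteq> j \<Longrightarrow> P!i \<noteq> P!j"
        using P nth_eq_iff_index_eq n_def unfolding tpath_def by blast
      have adjP: "\<And>i. Suc i < n \<Longrightarrow> adj ET (P!i) (P!Suc i)" using P n_def unfolding tpath_def by blast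
      have d0: "deg_le1 ET (P!0)" using endpoint_deg[OF H(1) H(2) M n2] .
      have M': "maxp VT ET (rev P)" using maxp_rev[OF M] .
      have "deg_le1 ET (rev P ! 0)" using endpoint_deg[OF H(1) H(2) M'] n2 by simp
      moreover have "rev P ! 0 = P ! (n - 1)"
      proof -
        have "0 < length P" using n2 by linarith
        from rev_nth[OF this] show ?thesis using n_def by simp
      qed
      ultimately have d1: "deg_le1 ET (P!(n - 1))" by simp
      have l0: "0 < n" "n - 1 < n" "0 \<noteq> n - 1" using n2 n_def by linarith+
      have R0: "P!0 \<in> R" using H0 d0 m[OF l0(1)] by blast
      have R1: "P!(n-1) \<in> R" using H0 d1 m[OF l0(2)] by blast
      have ne01: "P!0 \<noteq> P!(n-1)" using di[OF l0] .
      have RP: "R = {P!0, P!(n-1)}"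
      proof -
        have "{P!0, P!(n-1)} \<subseteq> R" using R0 R1 by auto
        moreover have "card {P!0, P!(n-1)} = 2" using ne01 by simp
        ultimately have "{P!0, P!(n-1)} = R" using H(5) card_seteq[OF H(18)] by simp
        then show ?thesis by simp
      qed
      have cR: "card R = 2" using RP ne01 by simp
      have Hd: "\<forall>v\<in>VT. deg_le1 ET v \<longrightarrow> v \<in> set P"
      proof (intro ballI impI)
        fix v assume "v \<in> VT" "deg_le1 ET v"
        then have "v \<in> R" using H0 by auto
        then show "v \<in> set P" using RP nth_mem[of 0 P] nth_mem[of "n-1" P] l0 n_def by auto
      qed
      have F1R: "P!0 \<in> F1" "P!(n-1) \<in> F1" using R0 R1 H(4) by auto
      consider "n = 2" | "n = 3" | "n = 4" | "n = 5" | "n \<ge> 6" using n2 n_def by linarith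
      then show ?thesis
      proof cases
        case 1
        have "adj ET (P!0) (P!1)" using adjP[of 0] 1 by simp
        then have "P!1 \<in> F2" using class_adj(1)[OF H(1) H(3)] F1R by blast
        moreover have "P!1 \<in> F1" using F1R 1 by simp
        ultimately show ?thesis using H(14) by blast
      next
        case 2
        have a1: "adj ET (P!0) (P!1)" using adjP[of 0] 2 by simp
        have "adj ET (P!1) (P!2)" using adjP[of 1] 2 by (simp add: numeral_2_eq_2)
        then have a2: "adj ET (P!2) (P!1)" using adj_sym by metis
        have "P!1 \<in> VT" using m 2 by simp
        moreover have "\<forall>r\<in>R. adj ET r (P!1)" using RP 2 a1 a2 by simp
        ultimately show ?thesis using H(6)[OF cR] by blast
      next
        case 3
        have a1: "adj ET (P!0) (P!1)" using adjP[of 0] 3 by simp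
        have a2: "adj ET (P!1) (P!2)" using adjP[of 1] 3 by (simp add: numeral_2_eq_2)
        have a3: "adj ET (P!2) (P!3)" using adjP[of 2] 3 by (simp add: numeral_3_eq_3)
        have "P!1 \<in> F2" using class_adj(1)[OF H(1) H(3) a1] F1R by blast
        then have "P!2 \<in> F1" using class_adj(2)[OF H(1) H(3) a2] by blast
        then have "P!3 \<in> F2" using class_adj(1)[OF H(1) H(3) a3] by blast
        moreover have "P!3 \<in> F1" using F1R 3 by simp
        ultimately show ?thesis using H(14) by blast
      next
        case 4
        have R4: "R = {P!0, P!4}" using RP 4 by simp
        have n5: "length P = 5" using 4 n_def by simp
        show ?thesis by (rule case4[OF h M n5 R4 Hd IH])
      next
        case 5
        have n6: "length P \<ge> 6" using 5 n_def by simp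
        have R6: "R = {P!0, P!(length P - 1)}" using RP n_def by simp
        show ?thesis by (rule caseG[OF h M n6 R6 Hd IH])
      qed
    qed
  qed
qed

end

theorem lemma2p4:
  fixes VT :: "'b set" and ET :: "'b set set" and F1 F2 R :: "'b set"
    and V :: "'a set" and E :: "'a set set" and X Y X' Y' :: "'a set"
    and \<epsilon> \<alpha> :: real and \<phi> :: "'b \<Rightarrow> 'a"
  assumes T: "tree VT ET"
    and F: "colour_classes VT ET F1 F2"
    and R: "R \<subseteq> F1" "card R \<le> 2"
    and R2: "card R = 2 \<Longrightarrow> \<not> (\<exists>w\<in>VT. \<forall>r\<in>R. adj ET r w)"
    and eps: "\<epsilon> > 0" and alpha: "\<alpha> > 2 * \<epsilon>"
    and G: "graph V E"
    and XY: "X \<subseteq> V" "Y \<subseteq> V" "X \<inter> Y = {}"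
    and reg: "eps_regular E \<epsilon> X Y"
    and dens: "density E X Y > 3 * \<alpha>"
    and F1X: "real (card F1) \<le> \<epsilon> * real (card X)"
    and F2Y: "real (card F2) \<le> \<epsilon> * real (card Y)"
    and X': "X' \<subseteq> X" "real (card X') > 2 * (\<epsilon> / \<alpha>) * real (card X)"
    and Y': "Y' \<subseteq> Y" "real (card Y') > 2 * (\<epsilon> / \<alpha>) * real (card Y)"
    and phi_inj: "inj_on \<phi> R"
    and phi_into: "\<phi> ` R \<subseteq> {x\<in>X'. real (card (neighbours_in E x Y')) > 3 * \<epsilon> * real (card Y)}"
  shows "\<exists>\<psi>. inj_on \<psi> VT \<and> \<psi> ` VT \<subseteq> X \<union> Y \<and> (\<forall>r\<in>R. \<psi> r = \<phi> r)
           \<and> (\<forall>u v. {u, v} \<in> ET \<longrightarrow> {\<psi> u, \<psi> v} \<in> E)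
           \<and> \<psi> ` F1 \<subseteq> X' \<and> \<psi> ` F2 \<subseteq> Y'"
proof -
  interpret emb V E X Y X' Y' \<epsilon> \<alpha>
    by unfold_locales (use G XY reg dens eps alpha X' Y' in auto)
  have TG: "graph VT ET" "acyclic_graph ET" using T unfolding tree_def by auto
  have "hyps VT ET F1 F2 R \<phi> {}"
    unfolding hyps_def
  proof (intro conjI)
    show "\<phi> ` R \<subseteq> gX" using phi_into unfolding gX_def .
    show "graph VT ET" "acyclic_graph ET" using TG by blast+
    show "colour_classes VT ET F1 F2" using F .
    show "R \<subseteq> F1" "card R \<le> 2" using R by blast+
    show "card R = 2 \<longrightarrow> \<not> (\<exists>w\<in>VT. \<forall>r\<in>R. adj ET r w)" using R2 by blast
    show "finite {}" by simp
    show "real (card F1 + card ({} \<inter> X)) \<le> \<epsilon> * real (card X)" using F1X by simp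
    show "real (card F2 + card ({} \<inter> Y)) \<le> \<epsilon> * real (card Y)" using F2Y by simp
    show "inj_on \<phi> R" using phi_inj .
    show "\<phi> ` R \<inter> {} = {}" by simp
  qed
  then obtain \<psi> where c: "concl VT ET F1 F2 R \<phi> {} \<psi>" using main_ind by blast
  have U: "F1 \<union> F2 = VT" using F unfolding colour_classes_def by auto
  have cc: "inj_on \<psi> VT \<and> (\<forall>r\<in>R. \<psi> r = \<phi> r) \<and> (\<forall>u v. adj ET u v \<longrightarrow> adj E (\<psi> u) (\<psi> v))
     \<and> \<psi> ` F1 \<subseteq> gX \<and> \<psi> ` F2 \<subseteq> gY \<and> \<psi> ` VT \<inter> {} = {}" using c unfolding concl_def .
  note c1 = cc[THEN conjunct1] cc[THEN conjunct2, THEN conjunct1] cc[THEN conjunct2, THEN conjunct2, THEN conjunct1]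
    cc[THEN conjunct2, THEN conjunct2, THEN conjunct2, THEN conjunct1]
    cc[THEN conjunct2, THEN conjunct2, THEN conjunct2, THEN conjunct2, THEN conjunct1]
  have i1: "\<psi> ` F1 \<subseteq> X'" using c1(4) gX_sub by blast
  have i2: "\<psi> ` F2 \<subseteq> Y'" using c1(5) gY_sub by blast
  have "\<psi> ` VT \<subseteq> X \<union> Y"
  proof
    fix p assume "p \<in> \<psi> ` VT"
    then obtain v where v: "v \<in> VT" "p = \<psi> v" by blast
    then have "v \<in> F1 \<or> v \<in> F2" using U by blast
    then show "p \<in> X \<union> Y" using v i1 i2 X'(1) Y'(1) by blast
  qed
  moreover have "\<forall>u v. {u, v} \<in> ET \<longrightarrow> {\<psi> u, \<psi> v} \<in> E" using c1(3) unfolding adj_def .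
  ultimately show ?thesis using c1(1,2) i1 i2 by blast
qed

end
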